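(* If $G$ is a fullerene, then $\mathrm{GP}(G)$ is an integer.
   Context: All graphs are simple and finite. For a connected graph $G$, $d_G(u,v)$ denotes the shortest-path distance and $\mathrm{Aut}(G)$ the automorphism group. The Graovac-Pisanski index is $$\mathrm{GP}(G)=\frac{|V(G)|}{2|\mathrm{Aut}(G)|}\sum_{u\in V(G)}\sum_{\alpha\in \mathrm{Aut}(G)} d_G(u,\alpha(u)).$$ A fullerene is a 3-connected 3-regular plane graph in which every face is bounded by a pentagon or a hexagon. *)

theory Defs
  imports Complex_Main
begin

definition simple_graph :: "'a set \<Rightarrow> ('a \<Rightarrow> 'a \<Rightarrow> bool) \<Rightarrow> bool" where
  "simple_graph V E \<longleftrightarrow> finite V \<and> (\<forall>u v. E u v \<longrightarrow> u \<in> V \<and> v \<in> V \<and> u \<noteq> v \<and> E v u)"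

fun is_walk :: "('a \<Rightarrow> 'a \<Rightarrow> bool) \<Rightarrow> 'a list \<Rightarrow> bool" where
  "is_walk E [] = False"
| "is_walk E [x] = True"
| "is_walk E (x # y # xs) = (E x y \<and> is_walk E (y # xs))"

definition walk_between :: "'a set \<Rightarrow> ('a \<Rightarrow> 'a \<Rightarrow> bool) \<Rightarrow> 'a \<Rightarrow> 'a \<Rightarrow> 'a list \<Rightarrow> bool" where
  "walk_between V E u v xs \<longleftrightarrow> is_walk E xs \<and> set xs \<subseteq> V \<and> hd xs = u \<and> last xs = v"

definition connected_graph :: "'a set \<Rightarrow> ('a \<Rightarrow> 'a \<Rightarrow> bool) \<Rightarrow> bool" where
  "connected_graph V E \<longleftrightarrow> V \<noteq> {} \<and> (\<forall>u\<in>V. \<forall>v\<in>V. \<exists>xs. walk_between V E u v xs)"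

text \<open>Shortest-path distance (number of edges of a shortest walk).\<close>
definition dist :: "'a set \<Rightarrow> ('a \<Rightarrow> 'a \<Rightarrow> bool) \<Rightarrow> 'a \<Rightarrow> 'a \<Rightarrow> nat" where
  "dist V E u v = (LEAST n. \<exists>xs. walk_between V E u v xs \<and> length xs = Suc n)"

definition delete_vertices :: "'a set \<Rightarrow> ('a \<Rightarrow> 'a \<Rightarrow> bool) \<Rightarrow> 'a set \<Rightarrow> ('a \<Rightarrow> 'a \<Rightarrow> bool)" where
  "delete_vertices V E S = (\<lambda>u v. E u v \<and> u \<notin> S \<and> v \<notin> S)"

definition three_connected :: "'a set \<Rightarrow> ('a \<Rightarrow> 'a \<Rightarrow> bool) \<Rightarrow> bool" where
  "three_connected V E \<longleftrightarrow> card V \<ge> 4 \<and>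
     (\<forall>S. S \<subseteq> V \<and> card S \<le> 2 \<longrightarrow> connected_graph (V - S) (delete_vertices V E S))"

definition neighbours :: "('a \<Rightarrow> 'a \<Rightarrow> bool) \<Rightarrow> 'a \<Rightarrow> 'a set" where
  "neighbours E u = {v. E u v}"

definition cubic :: "'a set \<Rightarrow> ('a \<Rightarrow> 'a \<Rightarrow> bool) \<Rightarrow> bool" where
  "cubic V E \<longleftrightarrow> (\<forall>u\<in>V. card (neighbours E u) = 3)"

definition edge_set :: "('a \<Rightarrow> 'a \<Rightarrow> bool) \<Rightarrow> 'a set set" where
  "edge_set E = {{u, v} | u v. E u v}"

definition darts :: "('a \<Rightarrow> 'a \<Rightarrow> bool) \<Rightarrow> ('a \<times> 'a) set" where
  "darts E = {(u, v). E u v}"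

text \<open>Combinatorial embedding (rotation system): sigma permutes the darts, keeps the tail
 vertex and acts cyclically (a single cycle) on the darts leaving each vertex.\<close>
definition rotation_system :: "('a \<Rightarrow> 'a \<Rightarrow> bool) \<Rightarrow> ('a \<times> 'a \<Rightarrow> 'a \<times> 'a) \<Rightarrow> bool" where
  "rotation_system E \<sigma> \<longleftrightarrow> bij_betw \<sigma> (darts E) (darts E) \<and>
     (\<forall>d\<in>darts E. fst (\<sigma> d) = fst d) \<and>
     (\<forall>u v w. E u v \<and> E u w \<longrightarrow> (\<exists>n. (\<sigma> ^^ n) (u, v) = (u, w)))"

text \<open>Face permutation: traverse dart (u,v), then turn at v.\<close>
definition face_perm :: "('a \<times> 'a \<Rightarrow> 'a \<times> 'a) \<Rightarrow> 'a \<times> 'a \<Rightarrow> 'a \<times> 'a" where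
  "face_perm \<sigma> d = \<sigma> (snd d, fst d)"

definition orbit :: "('b \<Rightarrow> 'b) \<Rightarrow> 'b \<Rightarrow> 'b set" where
  "orbit f x = {(f ^^ n) x | n. True}"

definition faces :: "('a \<Rightarrow> 'a \<Rightarrow> bool) \<Rightarrow> ('a \<times> 'a \<Rightarrow> 'a \<times> 'a) \<Rightarrow> ('a \<times> 'a) set set" where
  "faces E \<sigma> = orbit (face_perm \<sigma>) ` darts E"

text \<open>A rotation system of a connected graph is a plane (spherical) embedding iff
 Euler's formula V - E + F = 2 holds (genus 0).\<close>
definition plane_embedding :: "'a set \<Rightarrow> ('a \<Rightarrow> 'a \<Rightarrow> bool) \<Rightarrow> ('a \<times> 'a \<Rightarrow> 'a \<times> 'a) \<Rightarrow> bool" where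
  "plane_embedding V E \<sigma> \<longleftrightarrow> rotation_system E \<sigma> \<and>
     int (card V) - int (card (edge_set E)) + int (card (faces E \<sigma>)) = 2"

text \<open>A face is bounded by a k-cycle: its boundary walk has length k and visits k distinct vertices.\<close>
definition face_is_cycle_of_length :: "('a \<times> 'a) set \<Rightarrow> nat \<Rightarrow> bool" where
  "face_is_cycle_of_length F k \<longleftrightarrow> card F = k \<and> inj_on fst F"

definition fullerene :: "'a set \<Rightarrow> ('a \<Rightarrow> 'a \<Rightarrow> bool) \<Rightarrow> bool" where
  "fullerene V E \<longleftrightarrow> simple_graph V E \<and> three_connected V E \<and> cubic V E \<and>
     (\<exists>\<sigma>. plane_embedding V E \<sigma> \<and>
        (\<forall>F\<in>faces E \<sigma>. face_is_cycle_of_length F 5 \<or> face_is_cycle_of_length F 6))"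

definition Aut :: "'a set \<Rightarrow> ('a \<Rightarrow> 'a \<Rightarrow> bool) \<Rightarrow> ('a \<Rightarrow> 'a) set" where
  "Aut V E = {\<alpha>. bij_betw \<alpha> V V \<and> (\<forall>x. x \<notin> V \<longrightarrow> \<alpha> x = x) \<and>
                 (\<forall>u\<in>V. \<forall>v\<in>V. E (\<alpha> u) (\<alpha> v) \<longleftrightarrow> E u v)}"

definition GP :: "'a set \<Rightarrow> ('a \<Rightarrow> 'a \<Rightarrow> bool) \<Rightarrow> real" where
  "GP V E = real (card V) / (2 * real (card (Aut V E))) *
            (\<Sum>u\<in>V. \<Sum>\<alpha>\<in>Aut V E. real (dist V E u (\<alpha> u)))"

end

theory Submission
  imports Defs "HOL-Library.FuncSet"
begin

lemma aut_mem: "\<alpha> \<in> Aut V E \<Longrightarrow> x \<in> V \<Longrightarrow> \<alpha> x \<in> V"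
  unfolding Aut_def bij_betw_def by auto

lemma aut_out: "\<alpha> \<in> Aut V E \<Longrightarrow> x \<notin> V \<Longrightarrow> \<alpha> x = x"
  unfolding Aut_def by auto

lemma aut_id: "id \<in> Aut V E"
  unfolding Aut_def by auto

lemma aut_comp: "\<alpha> \<in> Aut V E \<Longrightarrow> \<beta> \<in> Aut V E \<Longrightarrow> \<alpha> \<circ> \<beta> \<in> Aut V E"
proof -
  assume a: "\<alpha> \<in> Aut V E" and b: "\<beta> \<in> Aut V E"
  have "bij_betw (\<alpha> \<circ> \<beta>) V V" using a b unfolding Aut_def by (auto intro: bij_betw_trans)
  moreover have "\<forall>u\<in>V. \<forall>v\<in>V. E ((\<alpha> \<circ> \<beta>) u) ((\<alpha> \<circ> \<beta>) v) \<longleftrightarrow> E u v"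
    using a b aut_mem[OF b] unfolding Aut_def by auto
  ultimately show ?thesis using a b unfolding Aut_def by auto
qed

definition ainv :: "'a set \<Rightarrow> ('a \<Rightarrow> 'a) \<Rightarrow> 'a \<Rightarrow> 'a" where
  "ainv V \<alpha> = (\<lambda>x. if x \<in> V then inv_into V \<alpha> x else x)"

lemma ainv_left: "\<alpha> \<in> Aut V E \<Longrightarrow> ainv V \<alpha> (\<alpha> x) = x"
  unfolding Aut_def ainv_def bij_betw_def by (cases "x \<in> V") (auto simp: inv_into_f_f)

lemma ainv_right: "\<alpha> \<in> Aut V E \<Longrightarrow> \<alpha> (ainv V \<alpha> x) = x"
  unfolding Aut_def ainv_def bij_betw_def by (auto simp: f_inv_into_f)

lemma ainv_aut: assumes "\<alpha> \<in> Aut V E" shows "ainv V \<alpha> \<in> Aut V E"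
proof -
  have b: "bij_betw \<alpha> V V" using assms unfolding Aut_def by auto
  have "bij_betw (inv_into V \<alpha>) V V" using b by (rule bij_betw_inv_into)
  hence b2: "bij_betw (ainv V \<alpha>) V V"
    by (rule bij_betw_cong[THEN iffD1, rotated]) (auto simp: ainv_def)
  have "E (ainv V \<alpha> u) (ainv V \<alpha> v) \<longleftrightarrow> E u v" if "u \<in> V" "v \<in> V" for u v
  proof -
    have "ainv V \<alpha> u \<in> V" "ainv V \<alpha> v \<in> V" using b2 that by (auto simp: bij_betw_def)
    hence "E (\<alpha> (ainv V \<alpha> u)) (\<alpha> (ainv V \<alpha> v)) \<longleftrightarrow> E (ainv V \<alpha> u) (ainv V \<alpha> v)"
      using assms unfolding Aut_def by auto
    thus ?thesis using ainv_right[OF assms] by simp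
  qed
  thus ?thesis using b2 unfolding Aut_def by (auto simp: ainv_def)
qed

lemma finite_Aut: assumes "finite V" shows "finite (Aut V E)"
proof -
  have inj: "inj_on (\<lambda>\<alpha>. restrict \<alpha> V) (Aut V E)"
  proof (rule inj_onI)
    fix a b assume a: "a \<in> Aut V E" and b: "b \<in> Aut V E" and eq: "restrict a V = restrict b V"
    show "a = b"
    proof
      fix x
      have "restrict a V x = restrict b V x" using eq by simp
      thus "a x = b x"
        using a b aut_out[of a V E x] aut_out[of b V E x]
        by (cases "x \<in> V") auto
    qed
  qed
  have "(\<lambda>\<alpha>. restrict \<alpha> V) ` Aut V E \<subseteq> V \<rightarrow>\<^sub>E V" using aut_mem by fastforce
  hence "finite ((\<lambda>\<alpha>. restrict \<alpha> V) ` Aut V E)"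
    using finite_PiE[OF assms, of "\<lambda>_. V"] assms by (auto intro: finite_subset)
  thus ?thesis using finite_imageD inj by blast
qed

lemma walk_map: "\<alpha> \<in> Aut V E \<Longrightarrow> is_walk E xs \<Longrightarrow> set xs \<subseteq> V \<Longrightarrow> is_walk E (map \<alpha> xs)"
  by (induction E xs rule: is_walk.induct) (auto simp: Aut_def)

lemma walk_between_map: assumes "\<alpha> \<in> Aut V E" "walk_between V E x y xs"
  shows "walk_between V E (\<alpha> x) (\<alpha> y) (map \<alpha> xs)"
proof -
  have "xs \<noteq> []" using assms(2) unfolding walk_between_def by auto
  thus ?thesis using assms walk_map[OF assms(1)] aut_mem[OF assms(1)]
    unfolding walk_between_def by (auto simp: hd_map last_map)
qed

lemma dist_aut: assumes "\<alpha> \<in> Aut V E" shows "dist V E (\<alpha> x) (\<alpha> y) = dist V E x y"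
proof -
  have "(\<exists>xs. walk_between V E (\<alpha> x) (\<alpha> y) xs \<and> length xs = Suc n) \<longleftrightarrow>
        (\<exists>xs. walk_between V E x y xs \<and> length xs = Suc n)" for n
  proof
    assume "\<exists>xs. walk_between V E (\<alpha> x) (\<alpha> y) xs \<and> length xs = Suc n"
    then obtain xs where "walk_between V E (\<alpha> x) (\<alpha> y) xs" "length xs = Suc n" by blast
    thus "\<exists>xs. walk_between V E x y xs \<and> length xs = Suc n"
      using walk_between_map[OF ainv_aut[OF assms]] ainv_left[OF assms] by (metis length_map)
  next
    assume "\<exists>xs. walk_between V E x y xs \<and> length xs = Suc n"
    thus "\<exists>xs. walk_between V E (\<alpha> x) (\<alpha> y) xs \<and> length xs = Suc n"
      using walk_between_map[OF assms] by (metis length_map)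
  qed
  thus ?thesis unfolding dist_def by simp
qed

lemma even_invol:
  assumes "finite D" "\<forall>x\<in>D. f x \<in> D \<and> f (f x) = x \<and> f x \<noteq> x"
  shows "even (card D)"
  using assms
proof (induction "card D" arbitrary: D rule: less_induct)
  case less
  show ?case
  proof (cases "D = {}")
    case True thus ?thesis by simp
  next
    case False
    then obtain d where d: "d \<in> D" by blast
    let ?D = "D - {d, f d}"
    have fd: "f d \<in> D" "f d \<noteq> d" using less.prems d by auto
    have c: "card ?D = card D - 2" using fd d less.prems(1) by (simp add: card_Diff_subset)
    have "card {d, f d} \<le> card D" using fd d less.prems(1) by (intro card_mono) auto
    hence "card D \<ge> 2" using fd by simp
    hence lt: "card ?D < card D" using c by simp
    have "\<forall>x\<in>?D. f x \<in> ?D \<and> f (f x) = x \<and> f x \<noteq> x"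
    proof
      fix x assume x: "x \<in> ?D"
      hence x': "x \<in> D" "x \<noteq> d" "x \<noteq> f d" by auto
      have fx: "f (f x) = x" "f x \<in> D" "f x \<noteq> x" using less.prems(2) x'(1) by auto
      have ffd: "f (f d) = d" using less.prems(2) d by auto
      have "f x \<noteq> d" using fx(1) x'(3) by auto
      moreover have "f x \<noteq> f d" using fx(1) ffd x'(2) by metis
      ultimately show "f x \<in> ?D \<and> f (f x) = x \<and> f x \<noteq> x" using fx by auto
    qed
    hence "even (card ?D)" using less.hyps[OF lt] less.prems(1) by simp
    thus ?thesis using c \<open>card D \<ge> 2\<close> by (simp add: even_diff_nat)
  qed
qed

lemma card_even:
  assumes sg: "simple_graph V E" and cu: "cubic V E"
  shows "even (card V)"
proof -
  have fin: "finite V" using sg unfolding simple_graph_def by auto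
  have dd: "darts E = Sigma V (neighbours E)"
    using sg unfolding darts_def neighbours_def simple_graph_def by auto
  have nf: "\<forall>u\<in>V. finite (neighbours E u)"
    using sg fin unfolding simple_graph_def neighbours_def by (auto intro: finite_subset)
  have "card (darts E) = (\<Sum>u\<in>V. card (neighbours E u))"
    unfolding dd using fin nf by simp
  also have "\<dots> = 3 * card V" using cu unfolding cubic_def by simp
  finally have c: "card (darts E) = 3 * card V" .
  have "finite (darts E)" unfolding dd using fin nf by simp
  moreover have "\<forall>x\<in>darts E. prod.swap x \<in> darts E \<and> prod.swap (prod.swap x) = x \<and> prod.swap x \<noteq> x"
    using sg unfolding darts_def simple_graph_def by auto
  ultimately have "even (card (darts E))" by (rule even_invol)
  thus ?thesis using c by simp
qed

lemma count_eq:
  assumes g: "\<gamma> \<in> Aut V E"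
  shows "card {\<alpha>\<in>Aut V E. \<alpha> u = \<gamma> u} = card {\<alpha>\<in>Aut V E. \<alpha> u = u}"
proof -
  have "bij_betw (\<lambda>\<alpha>. ainv V \<gamma> \<circ> \<alpha>) {\<alpha>\<in>Aut V E. \<alpha> u = \<gamma> u} {\<alpha>\<in>Aut V E. \<alpha> u = u}"
  proof (rule bij_betw_byWitness[where f'="\<lambda>\<alpha>. \<gamma> \<circ> \<alpha>"])
    show "\<forall>a\<in>{\<alpha> \<in> Aut V E. \<alpha> u = \<gamma> u}. \<gamma> \<circ> (ainv V \<gamma> \<circ> a) = a"
      using ainv_right[OF g] by (auto simp: fun_eq_iff)
    show "\<forall>a\<in>{\<alpha> \<in> Aut V E. \<alpha> u = u}. ainv V \<gamma> \<circ> (\<gamma> \<circ> a) = a"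
      using ainv_left[OF g] by (auto simp: fun_eq_iff)
    show "(\<lambda>\<alpha>. ainv V \<gamma> \<circ> \<alpha>) ` {\<alpha> \<in> Aut V E. \<alpha> u = \<gamma> u} \<subseteq> {\<alpha> \<in> Aut V E. \<alpha> u = u}"
      using ainv_left[OF g] aut_comp[OF ainv_aut[OF g]] by auto
    show "(\<circ>) \<gamma> ` {\<alpha> \<in> Aut V E. \<alpha> u = u} \<subseteq> {\<alpha> \<in> Aut V E. \<alpha> u = \<gamma> u}"
      using aut_comp[OF g] by auto
  qed
  thus ?thesis by (rule bij_betw_same_card)
qed

definition orb :: "'a set \<Rightarrow> ('a \<Rightarrow> 'a \<Rightarrow> bool) \<Rightarrow> 'a \<Rightarrow> 'a set" where
  "orb V E u = (\<lambda>\<alpha>. \<alpha> u) ` Aut V E"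

definition stc :: "'a set \<Rightarrow> ('a \<Rightarrow> 'a \<Rightarrow> bool) \<Rightarrow> 'a \<Rightarrow> nat" where
  "stc V E u = card {\<alpha>\<in>Aut V E. \<alpha> u = u}"

definition Dsum :: "'a set \<Rightarrow> ('a \<Rightarrow> 'a \<Rightarrow> bool) \<Rightarrow> 'a \<Rightarrow> nat" where
  "Dsum V E u = (\<Sum>v\<in>orb V E u. dist V E u v)"

lemma orbit_stab:
  assumes "finite V"
  shows "card (Aut V E) = card (orb V E u) * stc V E u"
proof -
  have f: "finite (Aut V E)" using finite_Aut[OF assms] .
  have "card (Aut V E) = (\<Sum>\<alpha>\<in>Aut V E. 1)" by simp
  also have "\<dots> = (\<Sum>v\<in>orb V E u. \<Sum>\<alpha>\<in>{x\<in>Aut V E. x u = v}. 1)"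
    unfolding orb_def by (rule sum.image_gen[OF f])
  also have "\<dots> = (\<Sum>v\<in>orb V E u. stc V E u)"
    by (rule sum.cong) (auto simp: orb_def stc_def count_eq)
  finally show ?thesis by simp
qed

lemma h_eq:
  assumes "finite V"
  shows "(\<Sum>\<alpha>\<in>Aut V E. dist V E u (\<alpha> u)) = stc V E u * Dsum V E u"
proof -
  have f: "finite (Aut V E)" using finite_Aut[OF assms] .
  have "(\<Sum>\<alpha>\<in>Aut V E. dist V E u (\<alpha> u)) =
      (\<Sum>v\<in>orb V E u. \<Sum>\<alpha>\<in>{x\<in>Aut V E. x u = v}. dist V E u (\<alpha> u))"
    unfolding orb_def by (rule sum.image_gen[OF f])
  also have "\<dots> = (\<Sum>v\<in>orb V E u. stc V E u * dist V E u v)"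
  proof (rule sum.cong)
    fix v assume "v \<in> orb V E u"
    then obtain \<gamma> where g: "\<gamma> \<in> Aut V E" "v = \<gamma> u" unfolding orb_def by auto
    have "(\<Sum>\<alpha>\<in>{x\<in>Aut V E. x u = v}. dist V E u (\<alpha> u)) = (\<Sum>\<alpha>\<in>{x\<in>Aut V E. x u = v}. dist V E u v)"
      by (rule sum.cong) auto
    thus "(\<Sum>\<alpha>\<in>{x\<in>Aut V E. x u = v}. dist V E u (\<alpha> u)) = stc V E u * dist V E u v"
      using count_eq[OF g(1)] g(2) by (simp add: stc_def)
  qed simp
  finally show ?thesis by (simp add: Dsum_def sum_distrib_left)
qed

lemma orbit_same:
  assumes "v \<in> orb V E u" shows "orb V E v = orb V E u"
proof -
  obtain \<gamma> where g: "\<gamma> \<in> Aut V E" "v = \<gamma> u" using assms unfolding orb_def by auto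
  have "orb V E v \<subseteq> orb V E u"
  proof
    fix w assume "w \<in> orb V E v"
    then obtain \<alpha> where a: "\<alpha> \<in> Aut V E" "w = \<alpha> v" unfolding orb_def by auto
    have "w = (\<alpha> \<circ> \<gamma>) u" using a g by simp
    thus "w \<in> orb V E u" unfolding orb_def using aut_comp[OF a(1) g(1)] by blast
  qed
  moreover have "orb V E u \<subseteq> orb V E v"
  proof
    fix w assume "w \<in> orb V E u"
    then obtain \<alpha> where a: "\<alpha> \<in> Aut V E" "w = \<alpha> u" unfolding orb_def by auto
    have "w = (\<alpha> \<circ> ainv V \<gamma>) v" using a g ainv_left[OF g(1)] by simp
    thus "w \<in> orb V E v" unfolding orb_def using aut_comp[OF a(1) ainv_aut[OF g(1)]] by blast
  qed
  ultimately show ?thesis by blast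
qed

lemma self_orb: "u \<in> orb V E u"
  unfolding orb_def by (rule image_eqI[OF _ aut_id]) simp

lemma D_same:
  assumes "v \<in> orb V E u" shows "Dsum V E v = Dsum V E u"
proof -
  obtain \<gamma> where g: "\<gamma> \<in> Aut V E" "v = \<gamma> u" using assms unfolding orb_def by auto
  define \<beta> where "\<beta> = ainv V \<gamma>"
  have b: "\<beta> \<in> Aut V E" unfolding \<beta>_def by (rule ainv_aut[OF g(1)])
  have inj: "inj_on \<beta> (orb V E u)"
    by (rule inj_onI) (metis \<beta>_def ainv_right g(1))
  have im: "\<beta> ` orb V E u = orb V E u"
  proof
    show "\<beta> ` orb V E u \<subseteq> orb V E u"
    proof
      fix w assume "w \<in> \<beta> ` orb V E u"
      then obtain \<alpha> where a: "\<alpha> \<in> Aut V E" "w = \<beta> (\<alpha> u)" unfolding orb_def by auto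
      have "w = (\<beta> \<circ> \<alpha>) u" using a by simp
      thus "w \<in> orb V E u" unfolding orb_def using aut_comp[OF b a(1)] by blast
    qed
    show "orb V E u \<subseteq> \<beta> ` orb V E u"
    proof
      fix w assume w: "w \<in> orb V E u"
      obtain \<alpha> where a: "\<alpha> \<in> Aut V E" "w = \<alpha> u" using w unfolding orb_def by auto
      have "\<gamma> w = (\<gamma> \<circ> \<alpha>) u" using a by simp
      hence "\<gamma> w \<in> orb V E u" unfolding orb_def using aut_comp[OF g(1) a(1)] by blast
      moreover have "w = \<beta> (\<gamma> w)" unfolding \<beta>_def using ainv_left[OF g(1)] by simp
      ultimately show "w \<in> \<beta> ` orb V E u" by blast
    qed
  qed
  have "Dsum V E v = (\<Sum>w\<in>orb V E u. dist V E (\<gamma> u) w)"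
    unfolding Dsum_def using orbit_same[OF assms] g(2) by simp
  also have "\<dots> = (\<Sum>w\<in>orb V E u. dist V E u (\<beta> w))"
  proof (rule sum.cong)
    fix w show "dist V E (\<gamma> u) w = dist V E u (\<beta> w)"
      using dist_aut[OF b, of "\<gamma> u" w] ainv_left[OF g(1)] by (simp add: \<beta>_def)
  qed simp
  also have "\<dots> = (\<Sum>w\<in>\<beta> ` orb V E u. dist V E u w)"
    using sum.reindex[OF inj, of "dist V E u"] by simp
  also have "\<dots> = Dsum V E u" unfolding im Dsum_def ..
  finally show ?thesis .
qed

lemma total_dvd:
  assumes fin: "finite V"
  shows "card (Aut V E) dvd (\<Sum>u\<in>V. \<Sum>\<alpha>\<in>Aut V E. dist V E u (\<alpha> u))"
proof -
  have "(\<Sum>u\<in>V. \<Sum>\<alpha>\<in>Aut V E. dist V E u (\<alpha> u)) = (\<Sum>u\<in>V. stc V E u * Dsum V E u)"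
    using h_eq[OF fin] by simp
  also have "\<dots> = (\<Sum>P\<in>orb V E ` V. \<Sum>u\<in>{x\<in>V. orb V E x = P}. stc V E u * Dsum V E u)"
    by (rule sum.image_gen[OF fin, where g="orb V E"])
  finally have eq: "(\<Sum>u\<in>V. \<Sum>\<alpha>\<in>Aut V E. dist V E u (\<alpha> u)) = \<dots>" .
  have "card (Aut V E) dvd (\<Sum>u\<in>{x\<in>V. orb V E x = P}. stc V E u * Dsum V E u)"
    if P: "P \<in> orb V E ` V" for P
  proof -
    obtain w where w: "w \<in> V" "P = orb V E w" using P by auto
    have ow: "orb V E w \<subseteq> V" unfolding orb_def using aut_mem w(1) by auto
    have set: "{x\<in>V. orb V E x = P} = orb V E w"
    proof
      show "{x\<in>V. orb V E x = P} \<subseteq> orb V E w"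
      proof
        fix x assume "x \<in> {x\<in>V. orb V E x = P}"
        hence "orb V E x = orb V E w" using w(2) by simp
        thus "x \<in> orb V E w" using self_orb[of x V E] by simp
      qed
      show "orb V E w \<subseteq> {x\<in>V. orb V E x = P}"
      proof
        fix x assume x: "x \<in> orb V E w"
        have "orb V E x = P" using orbit_same[OF x] w(2) by simp
        thus "x \<in> {x\<in>V. orb V E x = P}" using x ow by blast
      qed
    qed
    have fo: "finite (orb V E w)" unfolding orb_def using finite_Aut[OF fin] by simp
    have pos: "card (orb V E w) > 0" using fo self_orb[of w V E] by (auto simp: card_gt_0_iff)
    have "(\<Sum>u\<in>orb V E w. stc V E u * Dsum V E u) = (\<Sum>u\<in>orb V E w. stc V E w * Dsum V E w)"
    proof (rule sum.cong)
      fix u assume u: "u \<in> orb V E w"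
      have o1: "card (Aut V E) = card (orb V E u) * stc V E u" by (rule orbit_stab[OF fin])
      have o2: "card (Aut V E) = card (orb V E w) * stc V E w" by (rule orbit_stab[OF fin])
      have "card (orb V E w) * stc V E u = card (orb V E w) * stc V E w"
        using o1 o2 orbit_same[OF u] by metis
      hence "stc V E u = stc V E w" using pos by simp
      thus "stc V E u * Dsum V E u = stc V E w * Dsum V E w" using D_same[OF u] by simp
    qed simp
    also have "\<dots> = card (orb V E w) * stc V E w * Dsum V E w" by (simp add: mult.assoc)
    also have "\<dots> = card (Aut V E) * Dsum V E w"
      using orbit_stab[OF fin, of E w] by simp
    finally have fin2: "(\<Sum>u\<in>orb V E w. stc V E u * Dsum V E u) = card (Aut V E) * Dsum V E w" .
    show ?thesis unfolding set fin2 by (rule dvd_triv_left)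
  qed
  thus ?thesis unfolding eq by (rule dvd_sum)
qed

theorem proposition3p5:
  fixes V :: "'a set" and E :: "'a \<Rightarrow> 'a \<Rightarrow> bool"
  assumes "fullerene V E"
  shows "GP V E \<in> \<int>"
proof -
  have sg: "simple_graph V E" and cu: "cubic V E" using assms unfolding fullerene_def by auto
  have fin: "finite V" using sg unfolding simple_graph_def by auto
  obtain m where m: "card V = 2 * m" using card_even[OF sg cu] by blast
  obtain K where K: "(\<Sum>u\<in>V. \<Sum>\<alpha>\<in>Aut V E. dist V E u (\<alpha> u)) = card (Aut V E) * K"
    using total_dvd[OF fin] by blast
  have pos: "card (Aut V E) > 0" using finite_Aut[OF fin] aut_id card_gt_0_iff by blast
  have "(\<Sum>u\<in>V. \<Sum>\<alpha>\<in>Aut V E. real (dist V E u (\<alpha> u))) = real (card (Aut V E) * K)"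
    unfolding K[symmetric] by simp
  hence "GP V E = real (2 * m) / (2 * real (card (Aut V E))) * real (card (Aut V E) * K)"
    unfolding GP_def m by simp
  also have "\<dots> = real (m * K)" using pos by (simp add: field_simps)
  finally show ?thesis by simp
qed

end
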